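(* Let $k\in\mathbb{N}$ and $t\in(0,1)$, and let $A_{\infty,k,t}$ be the matrix defined in the context, with first row $(a_0,a_1,a_2,\ldots)$. Then, as identities of formal Laurent/power series in $s$ (equivalently, of convergent series for $|s|$ small and positive), $$\mathcal S(A_{\infty,k,t})(s)=\frac{1+ts}{s\bigl(1+(1-t)\sum_{j=1}^{k+1}(-s)^j\bigr)},\qquad \mathcal D(A_{\infty,k,t})(s,\lambda)=\frac{1+(1-t)\sum_{j=1}^{k+1}s^j}{1+s(\lambda-t)+\lambda(1-t)\sum_{j=2}^{k+2}s^j}.$$
   Context: For $x\in\mathbb R$, $x_+=\max\{x,0\}$. For $k\in\mathbb N$ and $t\in(0,1)$, $A_{\infty,k,t}=(A(i,j))_{i,j\ge1}$ is the infinite Toeplitz Hessenberg matrix with $A(i,j)=a_{j-i}$ for $j\ge i$, $A(i+1,i)=1$, and $A(i,j)=0$ for $i\ge j+2$, where the sequence $(a_0,a_1,\ldots)$ is the unique one for which the leading principal minors satisfy $d_n:=\det A(\{1,\dots,n\})=t^{(n-k-1)_+}$ for all $n\in\mathbb N$ (uniqueness holds because, via Laplace expansion along the first row, $d_n=\sum_{j=1}^n(-1)^{j-1}a_{j-1}d_{n-j}$ with $d_0=1$, a triangular system in the $a_j$). For an infinite Toeplitz matrix $T=(\tau(i-j))_{i,j}$, its symbol is the Laurent series $\mathcal S(T)(s)=\sum_{j=-\infty}^{\infty}\tau(-j)s^j$ (so here $\mathcal S(A_{\infty,k,t})(s)=s^{-1}+\sum_{m\ge0}a_ms^m$), and $\mathcal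 D(T)(s,\lambda)=\sum_{j\ge0}D_j(\lambda)s^j$ with $D_0=1$ and $D_j(\lambda)=\det(T(\{1,\dots,j\})-\lambda I_j)$ for $j\ge1$, where $T(\{1,\dots,j\})$ is the leading principal $j\times j$ submatrix. *)

theory Defs
  imports "HOL-Computational_Algebra.Formal_Laurent_Series" "Jordan_Normal_Form.Determinant"
begin

text \<open>Leading principal n x n submatrix of the infinite Toeplitz Hessenberg matrix with
  first row (a 0, a 1, ...): entry (i,j) (0-based) is a (j - i) if j >= i, 1 if i = j + 1,
  and 0 otherwise.\<close>
definition hess_entry :: "(nat \<Rightarrow> real) \<Rightarrow> nat \<Rightarrow> nat \<Rightarrow> real" where
  "hess_entry a i j = (if i \<le> j then a (j - i) else if i = Suc j then 1 else 0)"

definition hess_mat :: "(nat \<Rightarrow> real) \<Rightarrow> nat \<Rightarrow> real mat" where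
  "hess_mat a n = mat n n (\<lambda>(i, j). hess_entry a i j)"

definition hess_symbol :: "(nat \<Rightarrow> real) \<Rightarrow> real fls" where
  "hess_symbol a = fls_X_inv + fps_to_fls (Abs_fps a)"

definition hess_D :: "(nat \<Rightarrow> real) \<Rightarrow> real \<Rightarrow> real fps" where
  "hess_D a x = Abs_fps (\<lambda>j. if j = 0 then 1
                      else det (hess_mat a j - x \<cdot>\<^sub>m 1\<^sub>m j))"

end

theory Submission imports Defs begin

definition gmat :: "(nat \<Rightarrow> real) \<Rightarrow> nat \<Rightarrow> (nat \<Rightarrow> real) \<Rightarrow> real mat" where
  "gmat b n c = mat n n (\<lambda>(i, j). if j = n - 1 then c i else hess_entry b i j)"

lemma sgn_step: "i \<le> m \<Longrightarrow> (-1::real) ^ (Suc m - i) = - ((-1) ^ (m - i))"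
  by (simp add: Suc_diff_le)

lemma gmat_det: "det (gmat b (Suc m) c) = (\<Sum>i<Suc m. (-1) ^ (m - i) * c i * det (hess_mat b i))"
proof (induction m arbitrary: c)
  case 0
  have C: "gmat b 1 c \<in> carrier_mat 1 1" by (simp add: gmat_def)
  have "det (gmat b 1 c) = (\<Sum>j<1. gmat b 1 c $$ (0,j) * cofactor (gmat b 1 c) 0 j)"
    by (rule laplace_expansion_row[OF C]) simp
  also have "\<dots> = c 0"
    by (simp add: gmat_def cofactor_def mat_delete_def)
  finally show ?case by (simp add: hess_mat_def)
next
  case (Suc m)
  let ?G = "gmat b (Suc (Suc m)) c"
  have C: "?G \<in> carrier_mat (Suc (Suc m)) (Suc (Suc m))" by (simp add: gmat_def)
  have "det ?G = (\<Sum>j<Suc (Suc m). ?G $$ (Suc m,j) * cofactor ?G (Suc m) j)"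
    by (rule laplace_expansion_row[OF C]) simp
  also have "\<dots> = (\<Sum>j<m. ?G $$ (Suc m,j) * cofactor ?G (Suc m) j)
      + ?G $$ (Suc m,m) * cofactor ?G (Suc m) m + ?G $$ (Suc m,Suc m) * cofactor ?G (Suc m) (Suc m)"
    by simp
  also have "(\<Sum>j<m. ?G $$ (Suc m,j) * cofactor ?G (Suc m) j) = 0"
    by (intro sum.neutral) (auto simp: gmat_def hess_entry_def)
  also have "?G $$ (Suc m,m) = 1" by (simp add: gmat_def hess_entry_def)
  also have "?G $$ (Suc m,Suc m) = c (Suc m)" by (simp add: gmat_def)
  finally have E: "det ?G = cofactor ?G (Suc m) m + c (Suc m) * cofactor ?G (Suc m) (Suc m)" by simp
  have D1: "mat_delete ?G (Suc m) (Suc m) = hess_mat b (Suc m)"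
    by (rule eq_matI) (auto simp: gmat_def hess_mat_def mat_delete_def)
  have D2: "mat_delete ?G (Suc m) m = gmat b (Suc m) c"
    by (rule eq_matI) (auto simp: gmat_def hess_mat_def mat_delete_def)
  have "det ?G = - det (gmat b (Suc m) c) + c (Suc m) * det (hess_mat b (Suc m))"
    unfolding E cofactor_def D1 D2 by simp
  also have "\<dots> = (\<Sum>i<Suc m. (-1) ^ (Suc m - i) * c i * det (hess_mat b i)) + c (Suc m) * det (hess_mat b (Suc m))"
  proof -
    have "- det (gmat b (Suc m) c) = (\<Sum>i<Suc m. (-1) ^ (Suc m - i) * c i * det (hess_mat b i))"
      unfolding Suc.IH sum_negf[symmetric] by (rule sum.cong) (auto simp: sgn_step)
    then show ?thesis by simp
  qed
  finally show ?case by simp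
qed

lemma hess_rec: "det (hess_mat b (Suc m)) = (\<Sum>i<Suc m. (-1) ^ (m - i) * b (m - i) * det (hess_mat b i))"
proof -
  have "hess_mat b (Suc m) = gmat b (Suc m) (\<lambda>i. b (m - i))"
    by (rule eq_matI) (auto simp: gmat_def hess_mat_def hess_entry_def)
  then show ?thesis by (simp add: gmat_det)
qed

lemma XiX: "fls_X_inv * fls_X = (1::real fls)" by (simp add: fls_X_inv_times_conv_shift fls_X_conv_shift_1)

lemma sgn2: "i \<le> m \<Longrightarrow> (-1::real)^(Suc m) * (-1)^(m-i) = -((-1)^i)"
proof -
  assume "i \<le> m" then obtain j where "m = i + j" using le_Suc_ex by blast
  then show ?thesis by (simp add: power_add)
qed

lemma dd0: "det (hess_mat b 0) = 1"
  by (simp add: hess_mat_def)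

lemma fps_recD: "Abs_fps (\<lambda>n. det (hess_mat b n)) * (1 - fps_X * Abs_fps (\<lambda>m. (-1)^m * b m)) = 1"
proof -
  let ?D = "Abs_fps (\<lambda>n. det (hess_mat b n))" and ?B = "Abs_fps (\<lambda>m. (-1::real)^m * b m)"
  have "?D - fps_X * (?D * ?B) = 1"
  proof (rule fps_ext)
    fix n show "(?D - fps_X * (?D * ?B)) $ n = 1 $ n"
    proof (cases n)
      case 0 then show ?thesis by (simp add: dd0)
    next
      case (Suc m)
      have "(?D * ?B) $ m = (\<Sum>i<Suc m. (-1) ^ (m - i) * b (m - i) * det (hess_mat b i))"
        by (simp add: fps_mult_nth atLeast0AtMost lessThan_Suc_atMost[symmetric] algebra_simps)
      then show ?thesis using Suc by (simp add: hess_rec)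
    qed
  qed
  then show ?thesis by (simp add: algebra_simps)
qed

lemma fps_recE: "Abs_fps (\<lambda>n. (-1)^n * det (hess_mat b n)) * (1 + fps_X * Abs_fps b) = 1"
proof -
  let ?E = "Abs_fps (\<lambda>n. (-1::real)^n * det (hess_mat b n))" and ?A = "Abs_fps b"
  have "?E + fps_X * (?E * ?A) = 1"
  proof (rule fps_ext)
    fix n show "(?E + fps_X * (?E * ?A)) $ n = 1 $ n"
    proof (cases n)
      case 0 then show ?thesis by (simp add: dd0)
    next
      case (Suc m)
      have "(-1)^(Suc m) * det (hess_mat b (Suc m))
          = (\<Sum>i<Suc m. (-1)^(Suc m) * (-1) ^ (m - i) * b (m - i) * det (hess_mat b i))"
        unfolding hess_rec sum_distrib_left by (simp only: mult.assoc)
      also have "\<dots> = - (\<Sum>i<Suc m. (-1) ^ i * det (hess_mat b i) * b (m - i))"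
        unfolding sum_negf[symmetric]
      proof (rule sum.cong[OF refl])
        fix i assume "i \<in> {..<Suc m}"
        then have "i \<le> m" by simp
        then have s: "(-1)^(Suc m) * (-1)^(m-i) = - ((-1::real)^i)" by (rule sgn2)
        show "(-1)^(Suc m) * (-1)^(m-i) * b (m-i) * det (hess_mat b i) = - ((-1)^i * det (hess_mat b i) * b (m-i))"
          unfolding s by simp
      qed
      also have "(\<Sum>i<Suc m. (-1) ^ i * det (hess_mat b i) * b (m - i)) = (?E * ?A) $ m"
        by (simp add: fps_mult_nth atLeast0AtMost lessThan_Suc_atMost[symmetric])
      finally show ?thesis using Suc by simp
    qed
  qed
  then show ?thesis by (simp add: algebra_simps)
qed

lemma fps_to_fls_sum: "fps_to_fls (sum f A) = sum (\<lambda>j. fps_to_fls (f j)) A"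
  by (induct A rule: infinite_finite_induct) auto

lemma negX_pow: "(-fps_X)^j = fps_const ((-1::real)^j) * fps_X^j"
proof -
  have m1: "(-1::real fps) = fps_const (-1)"
    by (metis fps_const_1_eq_1 fps_const_neg)
  have "(-fps_X)^j = (-1)^j * (fps_X::real fps)^j" by (rule power_minus)
  also have "(-1::real fps)^j = fps_const ((-1)^j)" unfolding m1 by (rule fps_const_power)
  finally show ?thesis .
qed

lemma cs: "(\<Sum>j=1..K. fps_const (c^j) * fps_X^j :: real fps) $ n = (if 1 \<le> n \<and> n \<le> K then c^n else 0)"
  by (auto simp: fps_sum_nth if_distrib sum.delta cong: if_cong)

theorem proposition1:
  fixes k :: nat and t :: real and a :: "nat \<Rightarrow> real"
  assumes "0 < t" and "t < 1"
    and minors: "\<And>n. n \<ge> 1 \<Longrightarrow> det (hess_mat a n) = t ^ (n - k - 1)"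
  shows "hess_symbol a =
           (1 + fls_const t * fls_X) /
           (fls_X * (1 + fls_const (1 - t) * (\<Sum>j = 1..k+1. (- fls_X) ^ j))) \<and>
         (\<forall>x. hess_D a x =
           (1 + fps_const (1 - t) * (\<Sum>j = 1..k+1. fps_X ^ j)) /
           (1 + fps_X * fps_const (x - t)
              + fps_const x * fps_const (1 - t) * (\<Sum>j = 2..k+2. fps_X ^ j)))"
proof -
  have dd: "det (hess_mat a n) = t ^ (n - k - 1)" for n
    using minors[of n] by (cases n) (auto simp: dd0)
  define N where "N = 1 + fps_const (1 - t) * (\<Sum>j = 1..k+1. fps_X ^ j)"
  define M where "M = 1 + fps_const (1 - t) * (\<Sum>j = 1..k+1. (- fps_X) ^ j)"
  define Da where "Da = Abs_fps (\<lambda>n. det (hess_mat a n))"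
  define Ea where "Ea = Abs_fps (\<lambda>n. (-1)^n * det (hess_mat a n))"
  define A where "A = Abs_fps a"
  define Ba where "Ba = Abs_fps (\<lambda>m. (-1)^m * a m)"
  have DaN: "Da * (1 - fps_const t * fps_X) = N"
  proof -
    have "Da - fps_const t * (fps_X * Da) = N"
    proof (rule fps_ext)
      fix n
      show "(Da - fps_const t * (fps_X * Da)) $ n = N $ n"
      proof -
        consider "n = 0" | "1 \<le> n \<and> n \<le> k + 1" | "k + 2 \<le> n" by linarith
        then show ?thesis
        proof cases
          case 1 then show ?thesis by (simp add: N_def Da_def dd fps_sum_nth)
        next
          case 2
          then have "(n - 1 - k - 1) = 0" "n - k - 1 = 0" by auto
          with 2 show ?thesis by (auto simp: N_def Da_def dd fps_sum_nth)
        next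
          case 3
          then have e: "n - Suc k = Suc (n - Suc (Suc k))" by auto
          from 3 show ?thesis by (auto simp: N_def Da_def dd fps_sum_nth e)
        qed
      qed
    qed
    then show ?thesis by (simp add: algebra_simps)
  qed
  have EaM: "Ea * (1 + fps_const t * fps_X) = M"
  proof -
    have Msum: "M = 1 + fps_const (1 - t) * (\<Sum>j = 1..k+1. fps_const ((-1)^j) * fps_X ^ j)"
      by (simp add: M_def negX_pow)
    have "Ea + fps_const t * (fps_X * Ea) = M"
    proof (rule fps_ext)
      fix n
      have Mn: "M $ n = (if n = 0 then 1 else 0) + (1-t) * (if 1 \<le> n \<and> n \<le> k+1 then (-1)^n else 0)" for n
        unfolding Msum fps_add_nth fps_mult_left_const_nth cs fps_one_nth ..
      show "(Ea + fps_const t * (fps_X * Ea)) $ n = M $ n"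
      proof (cases n)
        case 0 then show ?thesis by (simp add: Mn Ea_def dd cs dd0)
      next
        case (Suc m)
        show ?thesis
        proof (cases "m \<le> k")
          case True
          then have "Suc m - k - 1 = 0" "m - k - 1 = 0" by auto
          with True Suc show ?thesis by (simp add: Mn Ea_def dd cs algebra_simps)
        next
          case False
          then have e: "Suc m - k - 1 = Suc (m - k - 1)" by auto
          with False Suc show ?thesis by (simp add: Mn Ea_def dd cs algebra_simps)
        qed
      qed
    qed
    then show ?thesis by (simp add: algebra_simps)
  qed
  have part1: "hess_symbol a =
           (1 + fls_const t * fls_X) /
           (fls_X * (1 + fls_const (1 - t) * (\<Sum>j = 1..k+1. (- fls_X) ^ j)))"
  proof -
    have Mf: "1 + fls_const (1 - t) * (\<Sum>j = 1..k+1. (- fls_X) ^ j) = fps_to_fls M"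
      by (simp add: M_def fps_to_fls_sum fls_times_fps_to_fls fps_to_fls_power)
    have M0: "M \<noteq> 0"
    proof
      assume "M = 0" then have "M $ 0 = 0" by simp
      then show False by (simp add: M_def fps_sum_nth negX_pow)
    qed
    have nz: "fls_X * fps_to_fls M \<noteq> 0"
      using M0 by (simp add: fps_to_fls_nonzeroI)
    have "(1 + fps_X * A) * M = 1 + fps_const t * fps_X"
    proof -
      have "(1 + fps_X * A) * M = ((1 + fps_X * A) * Ea) * (1 + fps_const t * fps_X)"
        by (simp add: EaM[symmetric] mult.assoc)
      also have "(1 + fps_X * A) * Ea = 1" using fps_recE[of a] by (simp add: Ea_def A_def mult.commute)
      finally show ?thesis by simp
    qed
    then have "fps_to_fls ((1 + fps_X * A) * M) = fps_to_fls (1 + fps_const t * fps_X)" by simp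
    then have eq: "(1 + fls_X * fps_to_fls A) * fps_to_fls M = 1 + fls_const t * fls_X"
      by (simp add: fls_times_fps_to_fls)
    have "hess_symbol a * (fls_X * fps_to_fls M) = (1 + fls_X * fps_to_fls A) * fps_to_fls M"
      by (simp add: hess_symbol_def A_def distrib_right mult.assoc[symmetric] XiX)
    also note eq
    finally show ?thesis unfolding Mf using nz by (simp add: eq_divide_eq)
  qed
  have part2: "hess_D a x =
           (1 + fps_const (1 - t) * (\<Sum>j = 1..k+1. fps_X ^ j)) /
           (1 + fps_X * fps_const (x - t)
              + fps_const x * fps_const (1 - t) * (\<Sum>j = 2..k+2. fps_X ^ j))" for x
  proof -
    define b where "b = a(0 := a 0 - x)"
    define Db where "Db = Abs_fps (\<lambda>n. det (hess_mat b n))"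
    define Bb where "Bb = Abs_fps (\<lambda>m. (-1)^m * b m)"
    define Q where "Q = 1 + fps_X * fps_const (x - t)
              + fps_const x * fps_const (1 - t) * (\<Sum>j = 2..k+2. fps_X ^ j)"
    have hm: "hess_mat a j - x \<cdot>\<^sub>m 1\<^sub>m j = hess_mat b j" for j
      by (rule eq_matI) (auto simp: hess_mat_def hess_entry_def b_def)
    have HD: "hess_D a x = Db"
      by (rule fps_ext) (simp add: hess_D_def Db_def hm dd0)
    have BB: "Bb = Ba - fps_const x"
      by (rule fps_ext) (simp add: Bb_def Ba_def b_def)
    have Db1: "Db * (1 - fps_X * Bb) = 1" using fps_recD[of b] by (simp add: Db_def Bb_def)
    have Da1: "Da * (1 - fps_X * Ba) = 1" using fps_recD[of a] by (simp add: Da_def Ba_def)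
    have N1: "N * (1 - fps_X * Ba) = 1 - fps_const t * fps_X"
      using Da1 DaN[symmetric] by (simp add: mult.commute mult.left_commute)
    have sh: "(\<Sum>j = 2..k+2. fps_X ^ j) = fps_X * (\<Sum>j = 1..k+1. (fps_X :: real fps) ^ j)"
    proof -
      have "(\<Sum>j = 2..k+2. (fps_X :: real fps) ^ j) = (\<Sum>j = Suc 1..Suc (k+1). fps_X ^ j)" by (simp add: numeral_2_eq_2)
      also have "\<dots> = (\<Sum>j = 1..k+1. fps_X ^ Suc j)" by (rule sum.shift_bounds_cl_Suc_ivl)
      finally show ?thesis by (simp only: sum_distrib_left power_Suc)
    qed
    have NQ: "N * (1 - fps_X * Bb) = Q"
    proof -
      have "N * (1 - fps_X * Bb) = N * (1 - fps_X * Ba) + fps_const x * fps_X * N"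
        by (simp add: BB algebra_simps)
      also have "\<dots> = (1 - fps_const t * fps_X) + fps_const x * fps_X * N"
        unfolding N1 ..
      also have "\<dots> = Q"
        unfolding Q_def sh N_def
      proof -
        have c1: "fps_const (x - t) = fps_const x - fps_const t" "fps_const (1 - t) = 1 - fps_const t"
          by simp_all
        show "1 - fps_const t * fps_X + fps_const x * fps_X * (1 + fps_const (1 - t) * (\<Sum>j = 1..k + 1. fps_X ^ j)) =
          1 + fps_X * fps_const (x - t) + fps_const x * fps_const (1 - t) * (fps_X * (\<Sum>j = 1..k + 1. fps_X ^ j))"
          unfolding c1 by (simp add: algebra_simps del: fps_const_sub fps_const_mult)
      qed
      finally show ?thesis .
    qed
    have DQ: "Db * Q = N"
      using Db1 NQ[symmetric] by (simp add: mult.commute mult.left_commute)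
    have Q0: "Q $ 0 \<noteq> 0" by (simp add: Q_def fps_sum_nth)
    have "N / Q = Db"
      using Q0 by (simp add: fps_divide_unit DQ[symmetric] mult.assoc inverse_mult_eq_1')
    then show ?thesis unfolding HD N_def[symmetric] Q_def[symmetric] by simp
  qed
  show ?thesis using part1 part2 by blast
qed

end
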